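(* Let $\Phi$ be an automorphism of $(Ass\text{-}\mathbf K)^0$ that fixes every object. Then for every object $A$, the main function satisfies $s_A(f_A(\mathbf K))=f_A(\mathbf K)$; that is, $s_A$ restricts to a permutation of the set $f_A(\mathbf K)$ of scalars of $A$.
   Context: $\mathbf K$ is an infinite field. A $\mathbf K$-algebra is an associative ring $A$ with unit together with a unital ring homomorphism $f_A:\mathbf K\to Z(A)$ into the center of $A$. Homomorphisms are unital ring homomorphisms $\nu:A\to B$ with $\nu\circ f_A=f_B$. $(Ass\text{-}\mathbf K)^0$ is the category of free associative $\mathbf K$-algebras (noncommutative polynomial algebras $\mathbf K\langle X\rangle$) on finite subsets $X$ of a fixed infinite set $X_0$, with all $\mathbf K$-algebra homomorphisms. $F_1$ denotes the free algebra on a single $x_0\in X_0$. For an object $A$ and $a\in A$, $\alpha_a:F_1\to A$ is the homomorphism with $x_0\mapsto a$. For an automorphism $\Phi$ fixing $F_1$, the main function is $s_A(a)=\Phi(\alpha_a)(x_0)$, so $\Phi(\mu)=s_B\circ\mu\circ s_A^{-1}$. *)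

theory Defs
  imports "HOL-Library.FuncSet"
begin

text \<open>Elements of the free associative algebra K<X> are finitely supported
  coefficient functions on words (lists) over X.\<close>

type_synonym ('x,'k) fa = "'x list \<Rightarrow> 'k"

definition FA :: "'x set \<Rightarrow> ('x,'k::field) fa set" where
  "FA X = {p. finite {w. p w \<noteq> 0} \<and> (\<forall>w. p w \<noteq> 0 \<longrightarrow> set w \<subseteq> X)}"

definition fa_add :: "('x,'k::field) fa \<Rightarrow> ('x,'k) fa \<Rightarrow> ('x,'k) fa" where
  "fa_add p q = (\<lambda>w. p w + q w)"

definition fa_mult :: "('x,'k::field) fa \<Rightarrow> ('x,'k) fa \<Rightarrow> ('x,'k) fa" where
  "fa_mult p q = (\<lambda>w. \<Sum>i\<le>length w. p (take i w) * q (drop i w))"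

definition fa_scalar :: "'k::field \<Rightarrow> ('x,'k) fa" where
  "fa_scalar c = (\<lambda>w. if w = [] then c else 0)"

definition fa_one :: "('x,'k::field) fa" where
  "fa_one = fa_scalar 1"

definition fa_var :: "'x \<Rightarrow> ('x,'k::field) fa" where
  "fa_var x = (\<lambda>w. if w = [x] then 1 else 0)"

definition fa_pow :: "('x,'k::field) fa \<Rightarrow> nat \<Rightarrow> ('x,'k) fa" where
  "fa_pow a n = ((fa_mult a) ^^ n) fa_one"

definition scalars :: "'x set \<Rightarrow> ('x,'k::field) fa set" where
  "scalars A = range fa_scalar"

definition fa_hom :: "'x set \<Rightarrow> 'x set \<Rightarrow> (('x,'k::field) fa \<Rightarrow> ('x,'k) fa) set" where
  "fa_hom X Y = {h. h \<in> extensional (FA X) \<and> h \<in> FA X \<rightarrow> FA Y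
     \<and> (\<forall>p\<in>FA X. \<forall>q\<in>FA X. h (fa_add p q) = fa_add (h p) (h q))
     \<and> (\<forall>p\<in>FA X. \<forall>q\<in>FA X. h (fa_mult p q) = fa_mult (h p) (h q))
     \<and> h fa_one = fa_one
     \<and> (\<forall>c. h (fa_scalar c) = fa_scalar c)}"

definition fa_id :: "'x set \<Rightarrow> ('x,'k::field) fa \<Rightarrow> ('x,'k) fa" where
  "fa_id X = restrict id (FA X)"

definition fa_comp :: "'x set \<Rightarrow> (('x,'k::field) fa \<Rightarrow> ('x,'k) fa) \<Rightarrow> (('x,'k) fa \<Rightarrow> ('x,'k) fa)
    \<Rightarrow> ('x,'k) fa \<Rightarrow> ('x,'k) fa" where
  "fa_comp X g f = compose (FA X) g f"

text \<open>Objects of (Ass-K)^0: finite subsets of the infinite set X_0 (= UNIV of type 'x).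
  An automorphism fixing every object is a family of bijections on hom-sets that is functorial.\<close>
definition obj_fixing_auto ::
  "('x set \<Rightarrow> 'x set \<Rightarrow> (('x,'k::field) fa \<Rightarrow> ('x,'k) fa) \<Rightarrow> (('x,'k) fa \<Rightarrow> ('x,'k) fa)) \<Rightarrow> bool" where
  "obj_fixing_auto \<Phi> \<longleftrightarrow>
     (\<forall>X Y. finite X \<longrightarrow> finite Y \<longrightarrow> bij_betw (\<Phi> X Y) (fa_hom X Y) (fa_hom X Y))
   \<and> (\<forall>X. finite X \<longrightarrow> \<Phi> X X (fa_id X) = fa_id X)
   \<and> (\<forall>X Y Z f g. finite X \<longrightarrow> finite Y \<longrightarrow> finite Z \<longrightarrow> f \<in> fa_hom X Y \<longrightarrow> g \<in> fa_hom Y Z \<longrightarrow>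
        \<Phi> X Z (fa_comp X g f) = fa_comp X (\<Phi> Y Z g) (\<Phi> X Y f))"

text \<open>alpha_a : F_1 = K<x0> -> A, x0 |-> a (substitution homomorphism).\<close>
definition alpha :: "'x \<Rightarrow> ('x,'k::field) fa \<Rightarrow> ('x,'k) fa \<Rightarrow> ('x,'k) fa" where
  "alpha x0 a = restrict (\<lambda>p. (\<lambda>w. \<Sum>u\<in>{u. p u \<noteq> 0}. p u * fa_pow a (length u) w)) (FA {x0})"

definition main_fun :: "('x set \<Rightarrow> 'x set \<Rightarrow> (('x,'k::field) fa \<Rightarrow> ('x,'k) fa) \<Rightarrow> (('x,'k) fa \<Rightarrow> ('x,'k) fa))
    \<Rightarrow> 'x \<Rightarrow> 'x set \<Rightarrow> ('x,'k) fa \<Rightarrow> ('x,'k) fa" where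
  "main_fun \<Phi> x0 A a = \<Phi> {x0} A (alpha x0 a) (fa_var x0)"

end

theory Submission imports Defs begin

definition ev :: "'k::field \<Rightarrow> ('x,'k) fa \<Rightarrow> 'k" where
  "ev c p = (\<Sum>u\<in>{u. p u \<noteq> 0}. p u * c ^ length u)"

lemma FA_sc: "fa_scalar c \<in> FA X"
proof -
  have "{w. fa_scalar c w \<noteq> 0} \<subseteq> {[]}" by (auto simp: fa_scalar_def split: if_splits)
  then show ?thesis unfolding FA_def by (auto intro: finite_subset simp: fa_scalar_def split: if_splits)
qed

lemma FA_empty: "p \<in> FA {} \<Longrightarrow> p = fa_scalar (p [])"
  unfolding FA_def fa_scalar_def by (rule ext) auto

lemma FA_mono: "p \<in> FA X \<Longrightarrow> X \<subseteq> Y \<Longrightarrow> p \<in> FA Y"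
  unfolding FA_def by blast

lemma add_closed: "p \<in> FA X \<Longrightarrow> q \<in> FA X \<Longrightarrow> fa_add p q \<in> FA X"
proof -
  assume p: "p \<in> FA X" and q: "q \<in> FA X"
  have "{w. fa_add p q w \<noteq> 0} \<subseteq> {w. p w \<noteq> 0} \<union> {w. q w \<noteq> 0}" by (auto simp: fa_add_def)
  with p q show ?thesis unfolding FA_def fa_add_def
    by (auto intro: finite_subset)
qed

lemma mult_nz: "fa_mult p q w \<noteq> 0 \<Longrightarrow> \<exists>i\<le>length w. p (take i w) \<noteq> 0 \<and> q (drop i w) \<noteq> 0"
  unfolding fa_mult_def by (metis (no_types, lifting) atMost_iff mult_eq_0_iff sum.neutral)

lemma mult_closed: "p \<in> FA X \<Longrightarrow> q \<in> FA X \<Longrightarrow> fa_mult p q \<in> FA X"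
proof -
  assume p: "p \<in> FA X" and q: "q \<in> FA X"
  have "{w. fa_mult p q w \<noteq> 0} \<subseteq> (\<lambda>(u,v). u @ v) ` ({w. p w \<noteq> 0} \<times> {w. q w \<noteq> 0})"
  proof
    fix w assume "w \<in> {w. fa_mult p q w \<noteq> 0}"
    then have "fa_mult p q w \<noteq> 0" by simp
    from mult_nz[OF this] obtain i where "p (take i w) \<noteq> 0" "q (drop i w) \<noteq> 0" by blast
    then show "w \<in> (\<lambda>(u,v). u @ v) ` ({w. p w \<noteq> 0} \<times> {w. q w \<noteq> 0})"
      by (intro image_eqI[of _ _ "(take i w, drop i w)"]) auto
  qed
  moreover have "finite ((\<lambda>(u,v). u @ v) ` ({w. p w \<noteq> 0} \<times> {w. q w \<noteq> 0}))"
    using p q unfolding FA_def by (intro finite_imageI finite_cartesian_product) auto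
  moreover have "set w \<subseteq> X" if "fa_mult p q w \<noteq> 0" for w
  proof -
    from mult_nz[OF that] obtain i where "p (take i w) \<noteq> 0" "q (drop i w) \<noteq> 0" by blast
    then have "set (take i w) \<subseteq> X" "set (drop i w) \<subseteq> X" using p q unfolding FA_def by auto
    then show ?thesis by (metis append_take_drop_id set_append Un_subset_iff)
  qed
  ultimately show ?thesis unfolding FA_def by (auto intro: finite_subset)
qed

lemma mult_sc_left: "fa_mult (fa_scalar a) q = (\<lambda>w. a * q w)"
proof (rule ext)
  fix w :: "'a list"
  have "fa_mult (fa_scalar a) q w = (\<Sum>i\<le>length w. if i = 0 then a * q w else 0)"
    unfolding fa_mult_def by (rule sum.cong) (auto simp: fa_scalar_def)
  also have "\<dots> = a * q w" by simp
  finally show "fa_mult (fa_scalar a) q w = a * q w" .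
qed

lemma mult_sc_sc: "fa_mult (fa_scalar a) (fa_scalar b) = fa_scalar (a * b)"
  unfolding mult_sc_left by (rule ext) (simp add: fa_scalar_def)

lemma fa_pow_Suc: "fa_pow a (Suc n) = fa_mult a (fa_pow a n)"
  unfolding fa_pow_def by simp

lemma fa_pow_0: "fa_pow a 0 = fa_one"
  unfolding fa_pow_def by simp

lemma pow_sc: "fa_pow (fa_scalar c) n = fa_scalar (c ^ n)"
  by (induction n) (simp_all add: fa_pow_0 fa_one_def fa_pow_Suc mult_sc_sc)

lemma mult_var_left: "fa_mult (fa_var x) q w = (if w \<noteq> [] \<and> hd w = x then q (tl w) else 0)"
proof -
  have "fa_mult (fa_var x) q w = (\<Sum>i\<le>length w. if i = 1 then (if w \<noteq> [] \<and> hd w = x then q (tl w) else 0) else 0)"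
    unfolding fa_mult_def
  proof (rule sum.cong)
    fix i assume i: "i \<in> {..length w}"
    show "fa_var x (take i w) * q (drop i w) = (if i = 1 then (if w \<noteq> [] \<and> hd w = x then q (tl w) else 0) else 0)"
    proof (cases "i = 1")
      case True
      then show ?thesis using i by (cases w) (auto simp: fa_var_def)
    next
      case False
      have "take i w \<noteq> [x]"
      proof
        assume "take i w = [x]"
        then have "length (take i w) = 1" by simp
        with i False show False by simp
      qed
      then show ?thesis using False by (simp add: fa_var_def)
    qed
  qed simp
  also have "\<dots> = (if w \<noteq> [] \<and> hd w = x then q (tl w) else 0)"
    by (cases w) (auto simp: Suc_le_eq)
  finally show ?thesis .
qed

lemma pow_var: "fa_pow (fa_var x) n = (\<lambda>w. if w = replicate n x then 1 else (0::'k::field))"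
proof (induction n)
  case 0
  then show ?case by (simp add: fa_pow_0 fa_one_def fa_scalar_def)
next
  case (Suc n)
  show ?case
  proof (rule ext)
    fix w show "fa_pow (fa_var x) (Suc n) w = (if w = replicate (Suc n) x then 1 else (0::'k))"
      by (cases w) (simp_all add: fa_pow_Suc mult_var_left Suc.IH)
  qed
qed

lemma pow_var_FA: "fa_pow (fa_var x) n \<in> FA {x}"
  unfolding FA_def pow_var by (auto simp: set_replicate_conv_if)

lemma var_FA: "fa_var x \<in> FA {x}"
  unfolding FA_def fa_var_def by auto

lemma ev_super: "finite S \<Longrightarrow> {u. p u \<noteq> 0} \<subseteq> S \<Longrightarrow> ev c p = (\<Sum>u\<in>S. p u * c ^ length u)"
  unfolding ev_def by (rule sum.mono_neutral_left) auto

lemma ev_add: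
  assumes "finite {u. p u \<noteq> 0}" "finite {u. q u \<noteq> 0}"
  shows "ev c (fa_add p q) = ev c p + ev c q"
proof -
  let ?S = "{u. p u \<noteq> 0} \<union> {u. q u \<noteq> 0}"
  have f: "finite ?S" using assms by simp
  have "ev c (fa_add p q) = (\<Sum>u\<in>?S. fa_add p q u * c ^ length u)"
    by (rule ev_super[OF f]) (auto simp: fa_add_def)
  also have "\<dots> = (\<Sum>u\<in>?S. p u * c ^ length u) + (\<Sum>u\<in>?S. q u * c ^ length u)"
    by (simp add: fa_add_def sum.distrib distrib_right)
  also have "\<dots> = ev c p + ev c q"
    using ev_super[OF f, of p c] ev_super[OF f, of q c] by simp
  finally show ?thesis .
qed

lemma ev_sc: "ev c (fa_scalar d) = d"
  by (subst ev_super[of "{[]}"]) (auto simp: fa_scalar_def)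

lemma mult_coef:
  assumes "finite P" "finite Q" "\<And>u. p u \<noteq> 0 \<Longrightarrow> u \<in> P" "\<And>v. q v \<noteq> 0 \<Longrightarrow> v \<in> Q"
  shows "fa_mult p q w = (\<Sum>x\<in>{x\<in>P \<times> Q. fst x @ snd x = w}. p (fst x) * q (snd x))"
proof -
  let ?I = "{i\<in>{..length w}. take i w \<in> P \<and> drop i w \<in> Q}"
  let ?f = "\<lambda>i. (take i w, drop i w)"
  have z: "\<forall>i\<in>{..length w} - ?I. p (take i w) * q (drop i w) = 0"
  proof
    fix i assume "i \<in> {..length w} - ?I"
    then have "take i w \<notin> P \<or> drop i w \<notin> Q" by auto
    then show "p (take i w) * q (drop i w) = 0" using assms(3,4) by auto
  qed
  have inj: "inj_on ?f ?I"
  proof (rule inj_onI)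
    fix i j assume "i \<in> ?I" "j \<in> ?I" "?f i = ?f j"
    then have "length (take i w) = length (take j w)" "i \<le> length w" "j \<le> length w" by auto
    then show "i = j" by simp
  qed
  have img: "?f ` ?I = {x\<in>P \<times> Q. fst x @ snd x = w}"
  proof
    show "?f ` ?I \<subseteq> {x\<in>P \<times> Q. fst x @ snd x = w}" by auto
    show "{x\<in>P \<times> Q. fst x @ snd x = w} \<subseteq> ?f ` ?I"
    proof
      fix x assume x: "x \<in> {x\<in>P \<times> Q. fst x @ snd x = w}"
      obtain u v where uv: "x = (u, v)" by fastforce
      show "x \<in> ?f ` ?I"
        using x uv by (intro image_eqI[of _ _ "length u"]) auto
    qed
  qed
  have "fa_mult p q w = (\<Sum>i\<in>?I. p (take i w) * q (drop i w))"
    unfolding fa_mult_def by (rule sum.mono_neutral_right[OF finite_atMost _ z]) auto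
  also have "(\<Sum>i\<in>?I. p (take i w) * q (drop i w)) = (\<Sum>x\<in>?f ` ?I. p (fst x) * q (snd x))"
    using sum.reindex[OF inj, of "\<lambda>x. p (fst x) * q (snd x)"] by (simp add: comp_def)
  also have "\<dots> = (\<Sum>x\<in>{x\<in>P \<times> Q. fst x @ snd x = w}. p (fst x) * q (snd x))"
    by (simp only: img)
  finally show ?thesis .
qed

lemma ev_mult:
  assumes fp: "finite {u. p u \<noteq> 0}" and fq: "finite {u. q u \<noteq> 0}"
  shows "ev c (fa_mult p q) = ev c p * ev c q"
proof -
  let ?P = "{u. p u \<noteq> 0}" and ?Q = "{u. q u \<noteq> 0}"
  let ?g = "\<lambda>x::'a list \<times> 'a list. fst x @ snd x"
  let ?T = "?g ` (?P \<times> ?Q)"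
  have fT: "finite ?T" using fp fq by auto
  have coef: "fa_mult p q w = (\<Sum>x\<in>{x\<in>?P \<times> ?Q. ?g x = w}. p (fst x) * q (snd x))" for w
    by (rule mult_coef[OF fp fq]) auto
  have supp: "{w. fa_mult p q w \<noteq> 0} \<subseteq> ?T"
  proof
    fix w assume "w \<in> {w. fa_mult p q w \<noteq> 0}"
    then have nz: "fa_mult p q w \<noteq> 0" by simp
    show "w \<in> ?T"
    proof (rule ccontr)
      assume "w \<notin> ?T"
      then have "{x\<in>?P \<times> ?Q. ?g x = w} = {}" by blast
      then have "fa_mult p q w = 0" by (simp only: coef sum.empty)
      with nz show False by simp
    qed
  qed
  have "ev c (fa_mult p q) = (\<Sum>w\<in>?T. fa_mult p q w * c ^ length w)"
    by (rule ev_super[OF fT supp])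
  also have "\<dots> = (\<Sum>w\<in>?T. \<Sum>x\<in>{x\<in>?P \<times> ?Q. ?g x = w}. p (fst x) * q (snd x) * c ^ length w)"
    by (rule sum.cong[OF refl]) (simp only: coef sum_distrib_right)
  also have "\<dots> = (\<Sum>w\<in>?T. \<Sum>x\<in>{x\<in>?P \<times> ?Q. ?g x = w}. (p (fst x) * c ^ length (fst x)) * (q (snd x) * c ^ length (snd x)))"
  proof (rule sum.cong[OF refl], rule sum.cong[OF refl])
    fix w x assume "x \<in> {x\<in>?P \<times> ?Q. ?g x = w}"
    then have "length w = length (fst x) + length (snd x)" by auto
    then show "p (fst x) * q (snd x) * c ^ length w = (p (fst x) * c ^ length (fst x)) * (q (snd x) * c ^ length (snd x))"
      by (simp add: power_add mult_ac)
  qed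
  also have "\<dots> = (\<Sum>x\<in>?P \<times> ?Q. (p (fst x) * c ^ length (fst x)) * (q (snd x) * c ^ length (snd x)))"
    by (rule sum.group) (use fp fq fT in auto)
  also have "\<dots> = ev c p * ev c q"
    unfolding ev_def sum_product sum.cartesian_product by (simp add: case_prod_beta)
  finally show ?thesis .
qed

lemma FA_fin: "p \<in> FA X \<Longrightarrow> finite {u. p u \<noteq> 0}"
  unfolding FA_def by auto

lemma alpha_sc: "p \<in> FA {x0} \<Longrightarrow> alpha x0 (fa_scalar c) p = fa_scalar (ev c p)"
  unfolding alpha_def pow_sc ev_def
  by (rule ext) (auto simp: fa_scalar_def)

lemma alpha_hom:
  fixes x0 :: 'x and c :: "'k::field"
  shows "alpha x0 (fa_scalar c) \<in> fa_hom {x0} Y"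
  unfolding fa_hom_def
proof (intro CollectI conjI ballI allI)
  show "alpha x0 (fa_scalar c) \<in> extensional (FA {x0})" unfolding alpha_def by simp
  show "alpha x0 (fa_scalar c) \<in> FA {x0} \<rightarrow> FA Y" by (auto simp: alpha_sc FA_sc)
  fix p q :: "('x,'k) fa" assume p: "p \<in> FA {x0}" and q: "q \<in> FA {x0}"
  show "alpha x0 (fa_scalar c) (fa_add p q) = fa_add (alpha x0 (fa_scalar c) p) (alpha x0 (fa_scalar c) q)"
    using p q by (simp add: alpha_sc add_closed ev_add FA_fin) (auto simp: fa_add_def fa_scalar_def)
  show "alpha x0 (fa_scalar c) (fa_mult p q) = fa_mult (alpha x0 (fa_scalar c) p) (alpha x0 (fa_scalar c) q)"
    by (simp only: alpha_sc[OF mult_closed[OF p q]] alpha_sc[OF p] alpha_sc[OF q]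
        ev_mult[OF FA_fin[OF p] FA_fin[OF q]] mult_sc_sc)
next
  show "alpha x0 (fa_scalar c) fa_one = fa_one"
    unfolding fa_one_def by (simp add: alpha_sc FA_sc ev_sc)
  fix d :: 'k show "alpha x0 (fa_scalar c) (fa_scalar d) = fa_scalar d"
    by (simp add: alpha_sc FA_sc ev_sc)
qed

lemma sc_add: "fa_add (fa_scalar a) (fa_scalar b) = fa_scalar (a + b)"
  by (rule ext) (simp add: fa_add_def fa_scalar_def)

lemma ev_var: "ev c (fa_var x) = c"
  by (subst ev_super[of "{[x]}"]) (auto simp: fa_var_def)

lemma hom_unique:
  fixes \<beta> :: "('x,'k::field) fa \<Rightarrow> ('x,'k) fa"
  assumes h: "\<beta> \<in> fa_hom {x0} Y" and v: "\<beta> (fa_var x0) = fa_scalar d"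
    and p: "p \<in> FA {x0}"
  shows "\<beta> p = fa_scalar (ev d p)"
proof -
  have hadd: "\<And>p q. p \<in> FA {x0} \<Longrightarrow> q \<in> FA {x0} \<Longrightarrow> \<beta> (fa_add p q) = fa_add (\<beta> p) (\<beta> q)"
    and hmult: "\<And>p q. p \<in> FA {x0} \<Longrightarrow> q \<in> FA {x0} \<Longrightarrow> \<beta> (fa_mult p q) = fa_mult (\<beta> p) (\<beta> q)"
    and hsc: "\<And>c. \<beta> (fa_scalar c) = fa_scalar c"
    using h unfolding fa_hom_def by auto
  have pw: "\<beta> (fa_pow (fa_var x0) n) = fa_scalar (d ^ n)" for n
  proof (induction n)
    case 0
    then show ?case by (simp add: fa_pow_0 fa_one_def hsc)
  next
    case (Suc n)
    have "\<beta> (fa_pow (fa_var x0) (Suc n)) = fa_mult (\<beta> (fa_var x0)) (\<beta> (fa_pow (fa_var x0) n))"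
      unfolding fa_pow_Suc by (rule hmult[OF var_FA pow_var_FA])
    also have "\<dots> = fa_scalar (d ^ Suc n)" by (simp add: v Suc.IH mult_sc_sc)
    finally show ?case .
  qed
  have main: "\<forall>p. p \<in> FA {x0} \<longrightarrow> {u. p u \<noteq> 0} = F \<longrightarrow> \<beta> p = fa_scalar (ev d p)"
    if "finite F" for F
    using that
  proof (induction F rule: finite_induct)
    case empty
    show ?case
    proof (intro allI impI)
      fix p :: "('x,'k) fa" assume "p \<in> FA {x0}" "{u. p u \<noteq> 0} = {}"
      then have "p = fa_scalar 0" by (auto simp: fa_scalar_def)
      then show "\<beta> p = fa_scalar (ev d p)" by (simp add: hsc ev_sc)
    qed
  next
    case (insert u F)
    show ?case
    proof (intro allI impI)
      fix p :: "('x,'k) fa" assume pF: "p \<in> FA {x0}" and supp: "{u. p u \<noteq> 0} = insert u F"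
      define p' where "p' = p(u := 0)"
      define m where "m = (\<lambda>w. if w = u then p u else 0)"
      have pu: "p u \<noteq> 0" using supp by auto
      have setu: "set u \<subseteq> {x0}" using pF pu unfolding FA_def by auto
      then have urep: "u = replicate (length u) x0"
        by (metis replicate_length_same singletonD subsetD)
      have sp': "{w. p' w \<noteq> 0} = F" using supp insert.hyps(2) unfolding p'_def by auto
      have p'F: "p' \<in> FA {x0}"
      proof -
        have "finite {w. p' w \<noteq> 0}" using sp' insert.hyps(1) by simp
        moreover have "\<forall>w. p' w \<noteq> 0 \<longrightarrow> set w \<subseteq> {x0}" using pF unfolding FA_def p'_def by auto
        ultimately show ?thesis unfolding FA_def by blast
      qed
      have mF: "m \<in> FA {x0}"
      proof -
        have "{w. m w \<noteq> 0} \<subseteq> {u}" by (auto simp: m_def)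
        then have "finite {w. m w \<noteq> 0}" by (rule finite_subset) simp
        moreover have "\<forall>w. m w \<noteq> 0 \<longrightarrow> set w \<subseteq> {x0}" using setu by (auto simp: m_def)
        ultimately show ?thesis unfolding FA_def by blast
      qed
      have psplit: "p = fa_add p' m" by (rule ext) (simp add: fa_add_def p'_def m_def)
      have mform: "m = fa_mult (fa_scalar (p u)) (fa_pow (fa_var x0) (length u))"
        unfolding mult_sc_left pow_var m_def by (rule ext) (auto simp: urep[symmetric])
      have bm: "\<beta> m = fa_scalar (p u * d ^ length u)"
        unfolding mform by (simp add: hmult[OF FA_sc pow_var_FA] hsc pw mult_sc_sc)
      have bp': "\<beta> p' = fa_scalar (ev d p')" using insert.IH p'F sp' by blast
      have "ev d p = (\<Sum>w\<in>insert u F. p w * d ^ length w)" unfolding ev_def supp ..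
      also have "\<dots> = p u * d ^ length u + (\<Sum>w\<in>F. p w * d ^ length w)"
        using insert.hyps by simp
      also have "(\<Sum>w\<in>F. p w * d ^ length w) = (\<Sum>w\<in>F. p' w * d ^ length w)"
        using insert.hyps(2) unfolding p'_def by (intro sum.cong) auto
      also have "\<dots> = ev d p'" unfolding ev_def sp' ..
      finally have evp: "ev d p = p u * d ^ length u + ev d p'" .
      have "\<beta> p = fa_add (\<beta> p') (\<beta> m)" by (subst psplit) (rule hadd[OF p'F mF])
      also have "\<dots> = fa_scalar (ev d p)" by (simp add: bp' bm sc_add evp add.commute)
      finally show "\<beta> p = fa_scalar (ev d p)" .
    qed
  qed
  show ?thesis using main[OF FA_fin[OF p]] p by blast
qed

lemma hom_maps: "h \<in> fa_hom X Y \<Longrightarrow> p \<in> FA X \<Longrightarrow> h p \<in> FA Y"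
  unfolding fa_hom_def by blast

lemma hom_sc: "h \<in> fa_hom X Y \<Longrightarrow> h (fa_scalar c) = fa_scalar c"
  unfolding fa_hom_def by blast

lemma hom_ext: "h \<in> fa_hom X Y \<Longrightarrow> h \<in> extensional (FA X)"
  unfolding fa_hom_def by blast

lemma FA_empty_ex: "p \<in> FA {} \<Longrightarrow> \<exists>e. p = fa_scalar e"
  using FA_empty by blast

theorem mainTheorem7:
  fixes \<Phi> :: "'x set \<Rightarrow> 'x set \<Rightarrow> (('x,'k::field) fa \<Rightarrow> ('x,'k) fa) \<Rightarrow> (('x,'k) fa \<Rightarrow> ('x,'k) fa)"
    and x0 :: 'x and A :: "'x set"
  assumes "infinite (UNIV :: 'k set)"
    and "infinite (UNIV :: 'x set)"
    and "obj_fixing_auto \<Phi>"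
    and "finite A"
  shows "main_fun \<Phi> x0 A ` scalars A = scalars A"
proof -
  have bij: "\<And>X Y. finite X \<Longrightarrow> finite Y \<Longrightarrow> bij_betw (\<Phi> X Y) (fa_hom X Y) (fa_hom X Y)"
    and comp: "\<And>X Y Z f g. finite X \<Longrightarrow> finite Y \<Longrightarrow> finite Z \<Longrightarrow> f \<in> fa_hom X Y \<Longrightarrow> g \<in> fa_hom Y Z \<Longrightarrow>
        \<Phi> X Z (fa_comp X g f) = fa_comp X (\<Phi> Y Z g) (\<Phi> X Y f)"
  proof -
    have c1: "\<forall>X Y. finite X \<longrightarrow> finite Y \<longrightarrow> bij_betw (\<Phi> X Y) (fa_hom X Y) (fa_hom X Y)"
      using assms(3) unfolding obj_fixing_auto_def by (rule conjunct1)
    have c3: "\<forall>X Y Z f g. finite X \<longrightarrow> finite Y \<longrightarrow> finite Z \<longrightarrow> f \<in> fa_hom X Y \<longrightarrow> g \<in> fa_hom Y Z \<longrightarrow>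
        \<Phi> X Z (fa_comp X g f) = fa_comp X (\<Phi> Y Z g) (\<Phi> X Y f)"
      using assms(3) unfolding obj_fixing_auto_def by (rule conjunct2[THEN conjunct2])
    show "\<And>X Y. finite X \<Longrightarrow> finite Y \<Longrightarrow> bij_betw (\<Phi> X Y) (fa_hom X Y) (fa_hom X Y)"
      using c1 by blast
    show "\<And>X Y Z f g. finite X \<Longrightarrow> finite Y \<Longrightarrow> finite Z \<Longrightarrow> f \<in> fa_hom X Y \<Longrightarrow> g \<in> fa_hom Y Z \<Longrightarrow>
        \<Phi> X Z (fa_comp X g f) = fa_comp X (\<Phi> Y Z g) (\<Phi> X Y f)"
      using c3 by blast
  qed
  define i :: "('x,'k) fa \<Rightarrow> ('x,'k) fa" where "i = restrict id (FA {})"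
  have ihom: "i \<in> fa_hom {} A"
    unfolding fa_hom_def
  proof (intro CollectI conjI ballI allI)
    show "i \<in> extensional (FA {})" unfolding i_def by simp
    show "i \<in> FA {} \<rightarrow> FA A" unfolding i_def by (auto intro: FA_mono)
    fix p q :: "('x,'k) fa" assume p: "p \<in> FA {}" and q: "q \<in> FA {}"
    show "i (fa_add p q) = fa_add (i p) (i q)" unfolding i_def using p q add_closed[OF p q] by simp
    show "i (fa_mult p q) = fa_mult (i p) (i q)" unfolding i_def using p q mult_closed[OF p q] by simp
  next
    show "i fa_one = fa_one" unfolding i_def fa_one_def by (simp add: FA_sc)
    fix c :: 'k show "i (fa_scalar c) = fa_scalar c" unfolding i_def by (simp add: FA_sc)
  qed
  have fact: "alpha x0 (fa_scalar c) = fa_comp {x0} i (alpha x0 (fa_scalar c))" for c :: 'k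
  proof (rule ext)
    fix p :: "('x,'k) fa"
    show "alpha x0 (fa_scalar c) p = fa_comp {x0} i (alpha x0 (fa_scalar c)) p"
      by (cases "p \<in> FA {x0}")
         (auto simp: fa_comp_def compose_def alpha_sc i_def FA_sc, simp add: alpha_def)
  qed
  have ms: "main_fun \<Phi> x0 A (fa_scalar c) = \<Phi> {x0} {} (alpha x0 (fa_scalar c)) (fa_var x0)"
    and msc: "main_fun \<Phi> x0 A (fa_scalar c) \<in> scalars A" for c :: 'k
  proof -
    let ?\<alpha> = "alpha x0 (fa_scalar c)"
    let ?\<gamma> = "\<Phi> {x0} {} ?\<alpha>"
    have ah: "?\<alpha> \<in> fa_hom {x0} {}" by (rule alpha_hom)
    have gh: "?\<gamma> \<in> fa_hom {x0} {}" using bij[of "{x0}" "{}"] ah by (auto dest: bij_betwE)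
    have jh: "\<Phi> {} A i \<in> fa_hom {} A" using bij[of "{}" A] ihom assms(4) by (auto dest: bij_betwE)
    have "?\<gamma> (fa_var x0) \<in> FA {}" using hom_maps[OF gh var_FA] .
    then obtain e where ge: "?\<gamma> (fa_var x0) = fa_scalar e" using FA_empty_ex by blast
    have "main_fun \<Phi> x0 A (fa_scalar c) = \<Phi> {x0} A (fa_comp {x0} i ?\<alpha>) (fa_var x0)"
      unfolding main_fun_def by (rule arg_cong[where f="\<lambda>f. \<Phi> {x0} A f (fa_var x0)"]) (rule fact)
    also have "\<dots> = fa_comp {x0} (\<Phi> {} A i) ?\<gamma> (fa_var x0)"
      using comp[of "{x0}" "{}" A ?\<alpha> i] ah ihom assms(4) by simp
    also have "\<dots> = \<Phi> {} A i (?\<gamma> (fa_var x0))"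
      unfolding fa_comp_def by (simp add: compose_def var_FA)
    also have "\<dots> = ?\<gamma> (fa_var x0)"
      unfolding ge by (rule hom_sc[OF jh])
    finally show "main_fun \<Phi> x0 A (fa_scalar c) = ?\<gamma> (fa_var x0)" .
    then show "main_fun \<Phi> x0 A (fa_scalar c) \<in> scalars A"
      unfolding scalars_def using ge by auto
  qed
  show ?thesis
  proof
    show "main_fun \<Phi> x0 A ` scalars A \<subseteq> scalars A"
      using msc unfolding scalars_def by auto
    show "scalars A \<subseteq> main_fun \<Phi> x0 A ` scalars A"
    proof
      fix s :: "('x,'k) fa" assume "s \<in> scalars A"
      then obtain c where sc: "s = fa_scalar c" unfolding scalars_def by auto
      have ah: "alpha x0 (fa_scalar c) \<in> fa_hom {x0} {}" by (rule alpha_hom)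
      then obtain \<beta> where bh: "\<beta> \<in> fa_hom {x0} {}" and bq: "\<Phi> {x0} {} \<beta> = alpha x0 (fa_scalar c)"
      proof -
        have "\<Phi> {x0} {} ` fa_hom {x0} {} = fa_hom {x0} {}"
          by (rule bij_betw_imp_surj_on[OF bij]) simp_all
        with ah have "alpha x0 (fa_scalar c) \<in> \<Phi> {x0} {} ` fa_hom {x0} {}" by simp
        then show ?thesis using that by (auto elim!: imageE)
      qed
      have "\<beta> (fa_var x0) \<in> FA {}" using hom_maps[OF bh var_FA] .
      then obtain d where be: "\<beta> (fa_var x0) = fa_scalar d" using FA_empty_ex by blast
      have "\<beta> = alpha x0 (fa_scalar d)"
      proof (rule extensionalityI)
        show "\<beta> \<in> extensional (FA {x0})" using hom_ext[OF bh] .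
        show "alpha x0 (fa_scalar d) \<in> extensional (FA {x0})" unfolding alpha_def by simp
        fix p :: "('x,'k) fa" assume "p \<in> FA {x0}"
        then show "\<beta> p = alpha x0 (fa_scalar d) p"
          by (simp add: hom_unique[OF bh be] alpha_sc)
      qed
      then have "main_fun \<Phi> x0 A (fa_scalar d) = \<Phi> {x0} {} \<beta> (fa_var x0)"
        using ms[of d] by simp
      also have "\<dots> = alpha x0 (fa_scalar c) (fa_var x0)" using bq by simp
      also have "\<dots> = s" using sc by (simp add: alpha_sc var_FA ev_var)
      finally have mfd: "main_fun \<Phi> x0 A (fa_scalar d) = s" .
      show "s \<in> main_fun \<Phi> x0 A ` scalars A"
        unfolding scalars_def using mfd by (intro image_eqI[where x="fa_scalar d"]) auto
    qed
  qed
qed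

end
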